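(* Let $q\in\mathbb{C}$ with $|q|<1$, $r\in\mathbb{N}$, $n\in\mathbb{Z}_{+}=\{0,1,2,\dots\}$, $x$ real with $x\neq0,-1,-2,\dots$, and let $f\in\mathbb{N}$ be odd. Then $$E_{n,q}^{(r)}(x)=\left(\frac{[2]_q}{[2]_{q^f}}\right)^r[f]_q^n\sum_{a_1,\dots,a_r=0}^{f-1}(-1)^{a_1+\cdots+a_r}E_{n,q^f}^{(r)}\!\left(\frac{a_1+\cdots+a_r+x}{f}\right),$$ and moreover $$E_{n,q}^{(r)}(x)=\frac{[2]_q^r}{(1-q)^n}\sum_{l=0}^{n}\binom{n}{l}(-q^x)^l\sum_{a_1,\dots,a_r=0}^{f-1}\frac{(-1)^{a_1+\cdots+a_r}q^{l(a_1+\cdots+a_r)}}{(1+q^{lf})^r}.$$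
   Context: For a complex number $q$ with $|q|<1$ and $x$ real, $[x]_q=\frac{1-q^x}{1-q}$ (so $[2]_q=1+q$, $[2]_{q^f}=1+q^f$, $[f]_q=\frac{1-q^f}{1-q}$). For $r\in\mathbb{N}$, the $q$-Euler polynomials of order $r$ are defined by the generating function $$[2]_q^r\sum_{m_1,\dots,m_r=0}^{\infty}(-1)^{m_1+\cdots+m_r}e^{[m_1+\cdots+m_r+x]_q t}=\sum_{n=0}^{\infty}E_{n,q}^{(r)}(x)\frac{t^n}{n!},$$ and $E_{n,q^f}^{(r)}$ denotes the same with $q$ replaced by $q^f$. *)

theory Defs
  imports "HOL-Analysis.Analysis"
begin

text \<open>A q-parameter is represented by its real-power function P, with P y standing for q^y.
  For the base q we use P y = q powr y (principal branch); for the base q^f we use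
  P y = q powr (f * y), i.e. (q^f)^y is read as q^(f y).\<close>

definition qpow :: "complex \<Rightarrow> real \<Rightarrow> complex" where
  "qpow q y = q powr (complex_of_real y)"

definition qnum :: "(real \<Rightarrow> complex) \<Rightarrow> real \<Rightarrow> complex" where
  "qnum P y = (1 - P y) / (1 - P 1)"

text \<open>Coefficient of t^n/n! in the (formal) generating function
  [2]^r \<Sum>_{m_1..m_r} (-1)^(m_1+..+m_r) e^([m_1+..+m_r+x] t), i.e.
  [2]^r \<Sum>_m (-1)^|m| [|m|+x]^n, where the divergent alternating sum is taken in the
  Abel sense (limit s -> 1- of the sum weighted by s^|m|).\<close>
definition qEuler :: "(real \<Rightarrow> complex) \<Rightarrow> nat \<Rightarrow> nat \<Rightarrow> real \<Rightarrow> complex" where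
  "qEuler P r n x = (1 + P 1) ^ r *
     Lim (at_left (1::real))
       (\<lambda>s. infsum (\<lambda>ms. (-1) ^ sum_list ms * complex_of_real s ^ sum_list ms
                         * (qnum P (real (sum_list ms) + x)) ^ n)
              {ms :: nat list. length ms = r})"

end

theory Submission
  imports Defs
begin

lemma list_reindex:
  "((\<lambda>(m::nat, ms). h (m # ms)) has_sum s) (UNIV \<times> {ms::nat list. length ms = r})
   \<longleftrightarrow> (h has_sum s) {ms::nat list. length ms = Suc r}"
  by (rule has_sum_reindex_bij_witness[of _ "\<lambda>ms. (hd ms, tl ms)" "\<lambda>(m,ms). m#ms"])
     (auto simp: length_Suc_conv)

lemma geo_real:
  fixes c :: real assumes "0 \<le> c" "c < 1"
  shows "((\<lambda>ms. c ^ sum_list ms) has_sum (1/(1-c))^r) {ms::nat list. length ms = r}"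
proof (induction r)
  case 0
  have "{ms::nat list. length ms = 0} = {[]}" by auto
  then show ?case by (simp add: has_sum_finite_iff)
next
  case (Suc r)
  have g: "((\<lambda>m. c^m) has_sum (1/(1-c))) (UNIV::nat set)"
    by (rule norm_summable_imp_has_sum) (use assms in \<open>auto intro: summable_geometric geometric_sums\<close>)
  define F where "F = (\<lambda>(m::nat, ms::nat list). c^m * c ^ sum_list ms)"
  have inner: "((\<lambda>ms. F (m, ms)) has_sum (c^m * (1/(1-c))^r)) {ms. length ms = r}" for m
    unfolding F_def using has_sum_cmult_right[OF Suc.IH] by simp
  have outer: "((\<lambda>m. c^m * (1/(1-c))^r) has_sum (1/(1-c))^Suc r) UNIV"
    using has_sum_cmult_left[OF g, of "(1/(1-c))^r"] by simp
  have summ: "F summable_on (UNIV \<times> {ms. length ms = r})"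
    by (rule summable_on_SigmaI[OF inner]) (use outer assms in \<open>auto simp: F_def summable_on_def\<close>)
  have "(F has_sum (1/(1-c))^Suc r) (UNIV \<times> {ms. length ms = r})"
    by (rule has_sum_SigmaI[OF inner outer summ])
  also have "F = (\<lambda>(m, ms). c ^ sum_list (m # ms))"
    by (auto simp: F_def power_add)
  finally show ?case by (rule list_reindex[THEN iffD1])
qed

lemma geo_complex:
  fixes c :: complex assumes "norm c < 1"
  shows "((\<lambda>ms. c ^ sum_list ms) has_sum (1/(1-c))^r) {ms::nat list. length ms = r}"
proof (induction r)
  case 0
  have "{ms::nat list. length ms = 0} = {[]}" by auto
  then show ?case by (simp add: has_sum_finite_iff)
next
  case (Suc r)
  have g: "((\<lambda>m. c^m) has_sum (1/(1-c))) (UNIV::nat set)"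
    by (rule norm_summable_imp_has_sum) (use assms in \<open>auto simp: norm_power intro: summable_geometric geometric_sums\<close>)
  define F where "F = (\<lambda>(m::nat, ms::nat list). c^m * c ^ sum_list ms)"
  have inner: "((\<lambda>ms. F (m, ms)) has_sum (c^m * (1/(1-c))^r)) {ms. length ms = r}" for m
    unfolding F_def using has_sum_cmult_right[OF Suc.IH] by simp
  have outer: "((\<lambda>m. c^m * (1/(1-c))^r) has_sum (1/(1-c))^Suc r) UNIV"
    using has_sum_cmult_left[OF g, of "(1/(1-c))^r"] by simp
  have "((\<lambda>ms. norm c ^ sum_list ms) has_sum (1/(1-norm c))^Suc r) {ms::nat list. length ms = Suc r}"
    by (rule geo_real) (use assms in auto)
  hence h1: "((\<lambda>(m,ms). norm c ^ sum_list (m # ms)) has_sum (1/(1-norm c))^Suc r) (UNIV \<times> {ms::nat list. length ms = r})"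
    by (rule list_reindex[THEN iffD2])
  have "(\<lambda>p. norm (F p)) summable_on (UNIV \<times> {ms. length ms = r})"
  proof -
    have eq: "(\<lambda>p. norm (F p)) = (\<lambda>(m,ms). norm c ^ sum_list (m # ms))"
      by (auto simp: F_def norm_mult norm_power power_add)
    show ?thesis using h1 unfolding eq summable_on_def by blast
  qed
  hence summ: "F summable_on (UNIV \<times> {ms. length ms = r})"
    by (rule abs_summable_summable)
  have "(F has_sum (1/(1-c))^Suc r) (UNIV \<times> {ms. length ms = r})"
    by (rule has_sum_SigmaI[OF inner outer summ])
  also have "F = (\<lambda>(m, ms). c ^ sum_list (m # ms))"
    by (auto simp: F_def power_add)
  finally show ?case by (rule list_reindex[THEN iffD1])
qed

lemma has_sum_finsum:
  fixes f :: "'i \<Rightarrow> 'a \<Rightarrow> complex"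
  assumes "finite I" "\<And>i. i \<in> I \<Longrightarrow> ((f i) has_sum s i) A"
  shows "((\<lambda>a. \<Sum>i\<in>I. f i a) has_sum (\<Sum>i\<in>I. s i)) A"
  using assms by (induction I rule: finite_induct) (auto intro: has_sum_add)

lemma one_plus_pow_nz:
  fixes Q :: complex assumes "norm Q < 1" shows "1 + Q^l \<noteq> 0"
proof
  assume h: "1 + Q^l = 0"
  show False
  proof (cases "l = 0")
    case True with h show False by simp
  next
    case False
    have "norm (Q^l) < 1" using assms False
      by (simp add: norm_power power_less_one_iff)
    moreover have "Q^l = -1" using h by (simp add: add_eq_0_iff)
    ultimately show False by simp
  qed
qed

lemma qEuler_closed:
  fixes P :: "real \<Rightarrow> complex" and Q :: complex
  assumes P: "\<And>m::nat. P (real m + x) = Q^m * P x" and P1: "P 1 = Q" and Q: "norm Q < 1"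
  shows "qEuler P r n x = (1+Q)^r / (1-Q)^n * (\<Sum>l=0..n. of_nat (n choose l) * (- P x)^l / (1+Q^l)^r)"
proof -
  define G where "G = (\<lambda>s::real. (1/(1-Q))^n * (\<Sum>l\<le>n. of_nat (n choose l) * (- P x)^l * (1/(1 + complex_of_real s * Q^l))^r))"
  have Q1: "Q \<noteq> 1" using Q by auto
  have S: "infsum (\<lambda>ms. (-1) ^ sum_list ms * complex_of_real s ^ sum_list ms
                         * (qnum P (real (sum_list ms) + x)) ^ n) {ms :: nat list. length ms = r} = G s"
    if s: "\<bar>s\<bar> < 1" for s
  proof -
    have trm: "(-1) ^ k * complex_of_real s ^ k * (qnum P (real k + x)) ^ n
          = (1/(1-Q))^n * (\<Sum>l\<le>n. of_nat (n choose l) * (- P x)^l * (- complex_of_real s * Q^l)^k)" for k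
    proof -
      have "qnum P (real k + x) = (- (Q^k * P x) + 1) * (1/(1-Q))" unfolding qnum_def P P1 by simp
      hence "(qnum P (real k + x))^n = (1/(1-Q))^n * (- (Q^k * P x) + 1)^n" by (simp add: power_divide)
      also have "(- (Q^k * P x) + 1)^n = (\<Sum>l\<le>n. of_nat (n choose l) * (- (Q^k * P x))^l)"
        using binomial_ring[of "- (Q^k * P x)" 1 n] by simp
      finally have e: "(qnum P (real k + x))^n = (1/(1-Q))^n * (\<Sum>l\<le>n. of_nat (n choose l) * (- (Q^k * P x))^l)" .
      have t: "(-1) ^ k * complex_of_real s ^ k * (of_nat (n choose l) * (- (Q^k * P x))^l)
             = of_nat (n choose l) * (- P x)^l * (- complex_of_real s * Q^l)^k" for l
      proof -
        have "- (Q^k * P x) = Q^k * (- P x)" by simp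
        hence "(- (Q^k * P x))^l = (- P x)^l * Q^(k*l)"
          by (simp only: power_mult_distrib power_mult mult.commute)
        moreover have "(- complex_of_real s * Q^l)^k = (-1)^k * complex_of_real s ^ k * Q^(k*l)"
        proof -
          have "- complex_of_real s * Q^l = (-1) * complex_of_real s * Q^l" by simp
          hence "(- complex_of_real s * Q^l)^k = (-1)^k * complex_of_real s ^ k * (Q^l)^k"
            by (simp only: power_mult_distrib)
          thus ?thesis by (simp add: power_mult[symmetric] mult.commute)
        qed
        ultimately show ?thesis by (simp add: algebra_simps)
      qed
      define z where "z = (-1) ^ k * complex_of_real s ^ k"
      have "z * (\<Sum>l\<le>n. of_nat (n choose l) * (- (Q^k * P x))^l) =
            (\<Sum>l\<le>n. of_nat (n choose l) * (- P x)^l * (- complex_of_real s * Q^l)^k)"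
        unfolding sum_distrib_left z_def by (rule sum.cong) (simp_all only: t)
      thus ?thesis unfolding e z_def[symmetric] by (simp add: ac_simps)
    qed
    have hs: "((\<lambda>ms. (1/(1-Q))^n * (\<Sum>l\<le>n. of_nat (n choose l) * (- P x)^l * (- complex_of_real s * Q^l)^sum_list ms))
            has_sum G s) {ms :: nat list. length ms = r}"
      unfolding G_def
    proof (rule has_sum_cmult_right, rule has_sum_finsum)
      fix l assume "l \<in> {..n}"
      have nc: "norm (- complex_of_real s * Q^l) < 1"
      proof -
        have "norm Q ^ l \<le> 1" using Q by (simp add: power_le_one)
        hence "\<bar>s\<bar> * norm Q ^ l \<le> \<bar>s\<bar>" by (simp add: mult_left_le)
        thus ?thesis using s by (simp add: norm_mult norm_power)
      qed
      have "((\<lambda>ms. (- complex_of_real s * Q^l)^sum_list ms) has_sum (1/(1-(- complex_of_real s * Q^l)))^r) {ms :: nat list. length ms = r}"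
        by (rule geo_complex[OF nc])
      thus "((\<lambda>ms. of_nat (n choose l) * (- P x)^l * (- complex_of_real s * Q^l)^sum_list ms) has_sum
             (of_nat (n choose l) * (- P x)^l * (1/(1 + complex_of_real s * Q^l))^r)) {ms :: nat list. length ms = r}"
        by (auto intro: has_sum_cmult_right)
    qed simp
    show ?thesis using hs by (simp add: trm infsumI)
  qed
  have lim: "(G \<longlongrightarrow> G 1) (at_left 1)"
    unfolding G_def
    by (intro tendsto_intros) (auto simp: one_plus_pow_nz[OF Q])
  have ev: "eventually (\<lambda>s. infsum (\<lambda>ms. (-1) ^ sum_list ms * complex_of_real s ^ sum_list ms
                         * (qnum P (real (sum_list ms) + x)) ^ n) {ms :: nat list. length ms = r} = G s) (at_left (1::real))"
    using eventually_at_left_real[of 0 "1::real", OF zero_less_one]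
    by eventually_elim (auto intro!: S)
  have "Lim (at_left (1::real)) (\<lambda>s. infsum (\<lambda>ms. (-1) ^ sum_list ms * complex_of_real s ^ sum_list ms
                         * (qnum P (real (sum_list ms) + x)) ^ n) {ms :: nat list. length ms = r}) = G 1"
    by (rule tendsto_Lim) (simp add: trivial_limit_at_left_real, rule tendsto_cong[OF ev, THEN iffD2, OF lim])
  hence "qEuler P r n x = (1+Q)^r * G 1" unfolding qEuler_def P1 by simp
  also have "\<dots> = (1+Q)^r / (1-Q)^n * (\<Sum>l=0..n. of_nat (n choose l) * (- P x)^l / (1+Q^l)^r)"
    by (simp add: G_def atLeast0AtMost power_one_over divide_inverse mult.assoc power_inverse)
  finally show ?thesis .
qed

lemma qpow_add: "qpow q (real m + y) = q^m * qpow q y"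
proof (cases "q = 0")
  case True thus ?thesis by (simp add: qpow_def)
next
  case False
  have "qpow q (real m + y) = q powr (of_nat m + complex_of_real y)" by (simp add: qpow_def)
  also have "\<dots> = q^m * qpow q y" using False by (simp add: powr_add powr_nat qpow_def)
  finally show ?thesis .
qed

lemma qpow_nat: "m > 0 \<Longrightarrow> qpow q (real m) = q^m"
  by (simp add: qpow_def powr_nat)

definition LL :: "nat \<Rightarrow> nat \<Rightarrow> nat list set" where
  "LL r f = {as :: nat list. length as = r \<and> set as \<subseteq> {..<f}}"

lemma LL_finite: "finite (LL r f)"
proof -
  have "LL r f = {xs. set xs \<subseteq> {..<f} \<and> length xs = r}" by (auto simp: LL_def)
  thus ?thesis using finite_lists_length_eq[of "{..<f}" r] by simp
qed

lemma LL_Suc: "LL (Suc r) f = (\<lambda>(a,as). a # as) ` ({..<f} \<times> LL r f)"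
  by (auto simp: LL_def length_Suc_conv image_iff)

lemma LL_sum:
  fixes c :: complex
  shows "(\<Sum>as\<in>LL r f. c ^ sum_list as) = (\<Sum>a<f. c^a)^r"
proof (induction r)
  case 0
  have "LL 0 f = {[]}" by (auto simp: LL_def)
  thus ?case by simp
next
  case (Suc r)
  have inj: "inj_on (\<lambda>(a,as). a # as) ({..<f} \<times> LL r f)" by (auto simp: inj_on_def)
  have "(\<Sum>as\<in>LL (Suc r) f. c ^ sum_list as) = (\<Sum>p\<in>{..<f} \<times> LL r f. c ^ fst p * c ^ sum_list (snd p))"
    unfolding LL_Suc by (subst sum.reindex[OF inj]) (auto simp: power_add intro!: sum.cong)
  also have "\<dots> = (\<Sum>a<f. c^a) * (\<Sum>as\<in>LL r f. c ^ sum_list as)"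
    by (simp add: sum_product sum.cartesian_product case_prod_beta)
  finally show ?case using Suc by simp
qed

lemma inner_geo:
  fixes q :: complex assumes q: "norm q < 1" and f: "odd f"
  shows "(\<Sum>as\<in>LL r f. (-1) ^ sum_list as * q ^ (l * sum_list as) / (1 + q ^ (l * f)) ^ r)
       = 1 / (1 + q^l)^r"
proof -
  have nz1: "1 + q^l \<noteq> 0" by (rule one_plus_pow_nz[OF q])
  have nz2: "1 + q^(l*f) \<noteq> 0" by (rule one_plus_pow_nz[OF q])
  have t: "(-1) ^ k * q ^ (l * k) = (- (q^l)) ^ k" for k
    using power_minus[of "q^l" k] by (simp only: power_mult)
  have "(\<Sum>as\<in>LL r f. (-1) ^ sum_list as * q ^ (l * sum_list as) / (1 + q ^ (l * f)) ^ r)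
      = (\<Sum>as\<in>LL r f. (- (q^l)) ^ sum_list as) / (1 + q ^ (l * f)) ^ r"
    unfolding sum_divide_distrib by (rule sum.cong) (simp_all only: t)
  also have "(\<Sum>as\<in>LL r f. (- (q^l)) ^ sum_list as) = (\<Sum>a<f. (- (q^l))^a)^r"
    by (rule LL_sum)
  also have "(\<Sum>a<f. (- (q^l))^a) = (1 + q^(l*f)) / (1 + q^l)"
  proof -
    have ne: "- (q^l) \<noteq> 1" proof
      assume "- (q^l) = 1" hence "1 + q^l = 0" by (metis add.commute neg_eq_iff_add_eq_0)
      thus False using nz1 by simp
    qed
    have "(- (q^l))^f = - (q^(l*f))" by (simp only: power_minus_odd[OF f] power_mult)
    hence "1 - (- (q^l))^f = 1 + q^(l*f)" by simp
    moreover have "1 - (- (q^l)) = 1 + q^l" by simp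
    ultimately show ?thesis using ne by (simp only: sum_gp_strict if_False)
  qed
  finally show ?thesis using nz1 nz2 by (simp add: power_divide)
qed

lemma qpow_scaled: "qpow q (real f * (real m + z)) = (q^f)^m * qpow q (real f * z)"
proof -
  have "real f * (real m + z) = real (f*m) + real f * z" by (simp add: algebra_simps)
  thus ?thesis by (simp only: qpow_add power_mult)
qed

theorem theorem4:
  fixes q :: complex and r n f :: nat and x :: real
  assumes "norm q < 1"
    and "r \<ge> 1"
    and "\<forall>k::nat. x \<noteq> - real k"
    and "odd f"
  shows "(qEuler (qpow q) r n x =
           ((1 + q) / (1 + q ^ f)) ^ r * ((1 - q ^ f) / (1 - q)) ^ n *
           (\<Sum>as \<in> {as :: nat list. length as = r \<and> set as \<subseteq> {..<f}}.
              (-1) ^ sum_list as *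
              qEuler (\<lambda>y. qpow q (real f * y)) r n ((real (sum_list as) + x) / real f)))
         \<and> (qEuler (qpow q) r n x =
           (1 + q) ^ r / (1 - q) ^ n *
           (\<Sum>l = 0..n. of_nat (n choose l) * (- qpow q x) ^ l *
              (\<Sum>as \<in> {as :: nat list. length as = r \<and> set as \<subseteq> {..<f}}.
                 (-1) ^ sum_list as * q ^ (l * sum_list as) / (1 + q ^ (l * f)) ^ r)))"
proof -
  note q = assms(1) and fo = assms(4)
  have fpos: "f > 0" using fo by (cases f) auto
  define w where "w = qpow q x"
  have LLe: "{as :: nat list. length as = r \<and> set as \<subseteq> {..<f}} = LL r f" by (simp add: LL_def)
  have closed: "qEuler (qpow q) r n x = (1+q)^r / (1-q)^n * (\<Sum>l=0..n. of_nat (n choose l) * (- w)^l / (1+q^l)^r)"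
    unfolding w_def
    by (rule qEuler_closed[OF qpow_add _ q]) (simp add: qpow_nat[of 1, simplified])
  define R2 where "R2 = (1 + q) ^ r / (1 - q) ^ n *
           (\<Sum>l = 0..n. of_nat (n choose l) * (- w) ^ l *
              (\<Sum>as \<in> LL r f. (-1) ^ sum_list as * q ^ (l * sum_list as) / (1 + q ^ (l * f)) ^ r))"
  have part2: "qEuler (qpow q) r n x = R2"
    unfolding closed R2_def inner_geo[OF q fo] by simp
  have qf: "norm (q^f) < 1" using q fpos by (simp add: norm_power power_less_one_iff)
  have E': "qEuler (\<lambda>y. qpow q (real f * y)) r n ((real (sum_list as) + x) / real f)
      = (1+q^f)^r / (1-q^f)^n * (\<Sum>l=0..n. of_nat (n choose l) * (- w)^l * (q^(l * sum_list as) / (1 + q^(l*f))^r))"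
    for as
  proof -
    have h1: "qpow q (real f * (real m + (real (sum_list as) + x) / real f)) = (q^f)^m * qpow q (real f * ((real (sum_list as) + x) / real f))" for m
      by (rule qpow_scaled)
    have h2: "qpow q (real f * 1) = q^f" using qpow_nat[OF fpos] by simp
    have h3: "qpow q (real f * ((real (sum_list as) + x) / real f)) = q ^ sum_list as * w"
      using fpos by (simp add: w_def qpow_add)
    show ?thesis
      unfolding qEuler_closed[where P="\<lambda>y. qpow q (real f * y)", OF h1 h2 qf] h3
    proof (intro arg_cong2[where f="(*)"] refl sum.cong)
      fix l
      have a: "- (q ^ sum_list as * w) = q ^ sum_list as * (- w)" by simp
      have b: "(- (q ^ sum_list as * w))^l = (-w)^l * q^(l * sum_list as)"
        unfolding a power_mult_distrib by (simp add: power_mult[symmetric] mult.commute)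
      have c: "(q^f)^l = q^(l*f)" by (simp add: power_mult[symmetric] mult.commute)
      show "of_nat (n choose l) * (- (q ^ sum_list as * w)) ^ l / (1 + (q ^ f) ^ l) ^ r =
            of_nat (n choose l) * (- w) ^ l * (q ^ (l * sum_list as) / (1 + q ^ (l * f)) ^ r)"
        unfolding b c by simp
    qed
  qed
  have nzf1: "1 + q^f \<noteq> 0" by (rule one_plus_pow_nz[OF q])
  have nzf2: "1 - q^f \<noteq> 0" using qf by auto
  have nz3: "1 - q \<noteq> 0" using q by auto
  define K where "K = (1+q^f)^r / (1-q^f)^n"
  have "(\<Sum>as\<in>LL r f. (-1) ^ sum_list as * qEuler (\<lambda>y. qpow q (real f * y)) r n ((real (sum_list as) + x) / real f))
     = K * (\<Sum>as\<in>LL r f. \<Sum>l=0..n. of_nat (n choose l) * (- w)^l * ((-1) ^ sum_list as * q^(l * sum_list as) / (1 + q^(l*f))^r))"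
    unfolding E' K_def sum_distrib_left
    by (intro sum.cong refl) (simp add: ac_simps)
  also have "\<dots> = K * (\<Sum>l=0..n. of_nat (n choose l) * (- w)^l * (\<Sum>as\<in>LL r f. (-1) ^ sum_list as * q^(l * sum_list as) / (1 + q^(l*f))^r))"
    by (subst sum.swap) (simp add: sum_distrib_left)
  finally have S1: "(\<Sum>as\<in>LL r f. (-1) ^ sum_list as * qEuler (\<lambda>y. qpow q (real f * y)) r n ((real (sum_list as) + x) / real f))
     = K * (\<Sum>l=0..n. of_nat (n choose l) * (- w)^l * (\<Sum>as\<in>LL r f. (-1) ^ sum_list as * q^(l * sum_list as) / (1 + q^(l*f))^r))" .
  have Kc: "((1 + q) / (1 + q ^ f)) ^ r * ((1 - q ^ f) / (1 - q)) ^ n * K = (1 + q) ^ r / (1 - q) ^ n"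
  proof -
    have a: "(1+q^f)^r \<noteq> 0" "(1-q^f)^n \<noteq> 0" "(1-q)^n \<noteq> 0" using nzf1 nzf2 nz3 by simp_all
    show ?thesis unfolding K_def power_divide using a by (simp add: divide_simps)
  qed
  have part1: "((1 + q) / (1 + q ^ f)) ^ r * ((1 - q ^ f) / (1 - q)) ^ n *
      (\<Sum>as\<in>LL r f. (-1) ^ sum_list as * qEuler (\<lambda>y. qpow q (real f * y)) r n ((real (sum_list as) + x) / real f)) = R2"
    unfolding S1 R2_def Kc[symmetric] by (simp add: mult.assoc)
  show ?thesis unfolding LLe part2 part1 unfolding R2_def w_def by simp
qed

end
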